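(* Let $A$ be an $m\times n$ polyomino. Then the diagram of $A$ is (the set of positions of) a Ferrers array $F$, and the ranked essential set of $A$ consists of the lower right corners of $F$, each with rank $0$. Furthermore, for nonnegative integral vectors $R,S$, a polyomino $A\in\mathcal{C}_{m,n}(R,S)$ is uniquely determined by its ranked essential set; that is, two polyominoes in $\mathcal{C}_{m,n}(R,S)$ with the same ranked essential set are equal.
   Context: A $(0,1)$-matrix is convex if in every row and every column the 1's occur consecutively. It is connected if it has no zero row and no zero column and every two 1's are joined by a path of 1's in which consecutive 1's are horizontally or vertically adjacent. A polyomino is a connected convex $(0,1)$-matrix. $\mathcal{C}_{m,n}(R,S)$ is the set of convex $m\times n$ $(0,1)$-matrices with row sum vector $R$ and column sum vector $S$. A Ferrers array $F(U)$ for a nonincreasing nonnegative integer vector $U=(u_1,\dots,u_m)$ is the set of positions $\{(i,j): 1\le j\le u_i\}$ (left-justified rows of lengths $u_i$); its lower right corners are the positions $(i,u_i)$ with $u_i>u_{i+1}$ (where $u_{m+1}=0$). The diagram of an $m\times n$ $(0,1)$-matrix $A$: for each 1 of $A$ at $(i,j)$ shade all positions $(i,j')$, $j'\ge j$, and $(i',j)$, $i'\ge i$; the diagram is the set of unshaded positions. The essential set is the set of positions $(i,j)$ of the diagram such that neither $(i+1,j)$ nor $(i,j+1)$ lies in the diagram; the ranked essential set consists of the triples $(i,j;r)$ with $(i,j)$ in the essential set and $r$ the number of 1's of $A$ in rows $1,\dots,i$ and columns $1,\dots,j$. *)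

theory Defs
  imports Main
begin

text \<open>An m x n (0,1)-matrix is represented by A :: nat => nat => bool with
  1-based indices: A i j means entry (i,j) is 1; entries outside
  {1..m} x {1..n} are required to be 0 (False).\<close>

definition is_01mat :: "nat \<Rightarrow> nat \<Rightarrow> (nat \<Rightarrow> nat \<Rightarrow> bool) \<Rightarrow> bool" where
  "is_01mat m n A \<longleftrightarrow> (\<forall>i j. A i j \<longrightarrow> 1 \<le> i \<and> i \<le> m \<and> 1 \<le> j \<and> j \<le> n)"

definition convex_mat :: "nat \<Rightarrow> nat \<Rightarrow> (nat \<Rightarrow> nat \<Rightarrow> bool) \<Rightarrow> bool" where
  "convex_mat m n A \<longleftrightarrow>
     (\<forall>i\<in>{1..m}. \<forall>j1 j j2. 1 \<le> j1 \<and> j1 \<le> j \<and> j \<le> j2 \<and> j2 \<le> n \<and> A i j1 \<and> A i j2 \<longrightarrow> A i j) \<and>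
     (\<forall>j\<in>{1..n}. \<forall>i1 i i2. 1 \<le> i1 \<and> i1 \<le> i \<and> i \<le> i2 \<and> i2 \<le> m \<and> A i1 j \<and> A i2 j \<longrightarrow> A i j)"

definition ones :: "nat \<Rightarrow> nat \<Rightarrow> (nat \<Rightarrow> nat \<Rightarrow> bool) \<Rightarrow> (nat \<times> nat) set" where
  "ones m n A = {(i, j). 1 \<le> i \<and> i \<le> m \<and> 1 \<le> j \<and> j \<le> n \<and> A i j}"

definition adj_ones :: "nat \<Rightarrow> nat \<Rightarrow> (nat \<Rightarrow> nat \<Rightarrow> bool) \<Rightarrow> ((nat \<times> nat) \<times> (nat \<times> nat)) set" where
  "adj_ones m n A = {((i, j), (i', j')). (i, j) \<in> ones m n A \<and> (i', j') \<in> ones m n A \<and>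
       ((i = i' \<and> (j' = j + 1 \<or> j = j' + 1)) \<or> (j = j' \<and> (i' = i + 1 \<or> i = i' + 1)))}"

definition connected_mat :: "nat \<Rightarrow> nat \<Rightarrow> (nat \<Rightarrow> nat \<Rightarrow> bool) \<Rightarrow> bool" where
  "connected_mat m n A \<longleftrightarrow>
     (\<forall>i\<in>{1..m}. \<exists>j\<in>{1..n}. A i j) \<and>
     (\<forall>j\<in>{1..n}. \<exists>i\<in>{1..m}. A i j) \<and>
     (\<forall>p\<in>ones m n A. \<forall>q\<in>ones m n A. (p, q) \<in> (adj_ones m n A)\<^sup>*)"

definition polyomino :: "nat \<Rightarrow> nat \<Rightarrow> (nat \<Rightarrow> nat \<Rightarrow> bool) \<Rightarrow> bool" where
  "polyomino m n A \<longleftrightarrow> is_01mat m n A \<and> convex_mat m n A \<and> connected_mat m n A"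

definition convex_class :: "nat \<Rightarrow> nat \<Rightarrow> (nat \<Rightarrow> nat) \<Rightarrow> (nat \<Rightarrow> nat) \<Rightarrow> (nat \<Rightarrow> nat \<Rightarrow> bool) set" where
  "convex_class m n R S = {A. is_01mat m n A \<and> convex_mat m n A \<and>
      (\<forall>i\<in>{1..m}. card {j\<in>{1..n}. A i j} = R i) \<and>
      (\<forall>j\<in>{1..n}. card {i\<in>{1..m}. A i j} = S j)}"

text \<open>Ferrers array F(U) for U = (U 1, ..., U m), and its lower right corners
  (with the convention U (m+1) = 0).\<close>
definition ferrers :: "nat \<Rightarrow> (nat \<Rightarrow> nat) \<Rightarrow> (nat \<times> nat) set" where
  "ferrers m U = {(i, j). 1 \<le> i \<and> i \<le> m \<and> 1 \<le> j \<and> j \<le> U i}"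

definition nonincr_vec :: "nat \<Rightarrow> (nat \<Rightarrow> nat) \<Rightarrow> bool" where
  "nonincr_vec m U \<longleftrightarrow> (\<forall>i. 1 \<le> i \<and> i < m \<longrightarrow> U (i + 1) \<le> U i)"

definition lr_corners :: "nat \<Rightarrow> (nat \<Rightarrow> nat) \<Rightarrow> (nat \<times> nat) set" where
  "lr_corners m U = {(i, U i) | i. 1 \<le> i \<and> i \<le> m \<and> (if i = m then 0 else U (i + 1)) < U i}"

text \<open>Diagram: positions not shaded, where a 1 at (i,j) shades (i,j') for j' >= j
  and (i',j) for i' >= i.\<close>
definition diagram :: "nat \<Rightarrow> nat \<Rightarrow> (nat \<Rightarrow> nat \<Rightarrow> bool) \<Rightarrow> (nat \<times> nat) set" where
  "diagram m n A = {(i, j). 1 \<le> i \<and> i \<le> m \<and> 1 \<le> j \<and> j \<le> n \<and>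
      \<not> (\<exists>j'. 1 \<le> j' \<and> j' \<le> j \<and> A i j') \<and> \<not> (\<exists>i'. 1 \<le> i' \<and> i' \<le> i \<and> A i' j)}"

definition essential_set :: "nat \<Rightarrow> nat \<Rightarrow> (nat \<Rightarrow> nat \<Rightarrow> bool) \<Rightarrow> (nat \<times> nat) set" where
  "essential_set m n A = {(i, j). (i, j) \<in> diagram m n A \<and>
      (i + 1, j) \<notin> diagram m n A \<and> (i, j + 1) \<notin> diagram m n A}"

definition rank_at :: "(nat \<Rightarrow> nat \<Rightarrow> bool) \<Rightarrow> nat \<Rightarrow> nat \<Rightarrow> nat" where
  "rank_at A i j = card {(i', j'). 1 \<le> i' \<and> i' \<le> i \<and> 1 \<le> j' \<and> j' \<le> j \<and> A i' j'}"

definition ranked_essential_set :: "nat \<Rightarrow> nat \<Rightarrow> (nat \<Rightarrow> nat \<Rightarrow> bool) \<Rightarrow> (nat \<times> nat \<times> nat) set" where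
  "ranked_essential_set m n A = {(i, j, rank_at A i j) | i j. (i, j) \<in> essential_set m n A}"

end

theory Submission
  imports Defs
begin

lemma quad:
  assumes P: "polyomino m n A" and i: "1 \<le> i" "i \<le> m" and j: "1 \<le> j" "j \<le> n"
    and r: "\<forall>j'. 1 \<le> j' \<and> j' \<le> j \<longrightarrow> \<not> A i j'"
    and c: "\<forall>i'. 1 \<le> i' \<and> i' \<le> i \<longrightarrow> \<not> A i' j"
    and ab: "A a b" "a \<le> i" "b \<le> j"
  shows False
proof -
  have 01: "is_01mat m n A" and conn: "connected_mat m n A" using P by (auto simp: polyomino_def)
  have "\<exists>c0\<in>{1..n}. A i c0" using conn i unfolding connected_mat_def by simp
  then obtain c0 where c0: "c0 \<in> {1..n}" "A i c0" by blast
  have cj: "c0 > j" using r c0 by force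
  have abo: "(a,b) \<in> ones m n A" using 01 ab by (auto simp: is_01mat_def ones_def)
  have ico: "(i,c0) \<in> ones m n A" using 01 c0 by (auto simp: is_01mat_def ones_def)
  have path: "((a,b),(i,c0)) \<in> (adj_ones m n A)\<^sup>*" using conn abo ico by (auto simp: connected_mat_def)
  have "fst q \<le> i \<and> snd q \<le> j" if "((a,b),q) \<in> (adj_ones m n A)\<^sup>*" for q
    using that
  proof (induction rule: rtrancl_induct)
    case base
    then show ?case using ab by simp
  next
    case (step y z)
    obtain y1 y2 z1 z2 where yz: "y = (y1,y2)" "z = (z1,z2)" by force
    have A1: "A y1 y2" "1 \<le> y1" "1 \<le> y2" and
      ad: "(y1 = z1 \<and> (z2 = y2 + 1 \<or> y2 = z2 + 1)) \<or> (y2 = z2 \<and> (z1 = y1 + 1 \<or> y1 = z1 + 1))"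
      using step.hyps(2) yz by (auto simp: adj_ones_def ones_def)
    have IH: "y1 \<le> i" "y2 \<le> j" using step.IH yz by auto
    show ?case
    proof (cases "y1 = i \<and> z1 = y1 + 1 \<and> y2 = z2")
      case True
      then show ?thesis using r A1 IH by auto
    next
      case False
      note F1 = False
      show ?thesis
      proof (cases "y2 = j \<and> z2 = y2 + 1 \<and> y1 = z1")
        case True
        then show ?thesis using c A1 IH by auto
      next
        case False
        then show ?thesis using F1 ad IH yz by auto
      qed
    qed
  qed
  from this[OF path] cj show False by simp
qed

lemma diag_down:
  assumes P: "polyomino m n A" and d: "(i,j) \<in> diagram m n A"
    and "1 \<le> i'" "i' \<le> i" "1 \<le> j'" "j' \<le> j"
  shows "(i',j') \<in> diagram m n A"
proof -
  have i: "1 \<le> i" "i \<le> m" "1 \<le> j" "j \<le> n"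
    and r: "\<forall>j'. 1 \<le> j' \<and> j' \<le> j \<longrightarrow> \<not> A i j'"
    and c: "\<forall>i'. 1 \<le> i' \<and> i' \<le> i \<longrightarrow> \<not> A i' j"
    using d by (auto simp: diagram_def)
  have "\<not> A a b" if "a \<le> i" "b \<le> j" for a b
    using quad[OF P i r c _ that] by blast
  then show ?thesis using assms i by (auto simp: diagram_def)
qed

lemma rank0:
  assumes P: "polyomino m n A" and d: "(i,j) \<in> diagram m n A"
  shows "rank_at A i j = 0"
proof -
  have i: "1 \<le> i" "i \<le> m" "1 \<le> j" "j \<le> n"
    and r: "\<forall>j'. 1 \<le> j' \<and> j' \<le> j \<longrightarrow> \<not> A i j'"
    and c: "\<forall>i'. 1 \<le> i' \<and> i' \<le> i \<longrightarrow> \<not> A i' j"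
    using d by (auto simp: diagram_def)
  have "\<not> A a b" if "a \<le> i" "b \<le> j" for a b
    using quad[OF P i r c _ that] by blast
  then have "{(i', j'). 1 \<le> i' \<and> i' \<le> i \<and> 1 \<le> j' \<and> j' \<le> j \<and> A i' j'} = {}" by auto
  then show ?thesis unfolding rank_at_def by (metis card.empty)
qed

lemma downset_int:
  fixes S :: "nat set"
  assumes "finite S" "\<forall>x\<in>S. x \<ge> 1" "\<forall>x\<in>S. \<forall>y. 1 \<le> y \<and> y \<le> x \<longrightarrow> y \<in> S"
  shows "S = {1..card S}"
proof (cases "S = {}")
  case True then show ?thesis by simp
next
  case False
  have "S = {1..Max S}"
  proof
    show "S \<subseteq> {1..Max S}"
    proof
      fix x assume "x \<in> S"
      then show "x \<in> {1..Max S}" using assms(1,2) Max_ge by simp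
    qed
    have M: "Max S \<in> S" using assms(1) False by simp
    show "{1..Max S} \<subseteq> S"
    proof
      fix y assume "y \<in> {1..Max S}"
      then show "y \<in> S" using assms(3) M by simp
    qed
  qed
  then have "card S = Max S" by (metis card_atLeastAtMost diff_Suc_1)
  with \<open>S = {1..Max S}\<close> show ?thesis by simp
qed

lemma nonincr_chain:
  assumes "nonincr_vec m U" "1 \<le> i" "i \<le> a" "a \<le> m"
  shows "U a \<le> U i"
  using assms(3,4)
proof (induction a rule: dec_induct)
  case base then show ?case by simp
next
  case (step k)
  have N: "\<forall>i. 1 \<le> i \<and> i < m \<longrightarrow> U (i + 1) \<le> U i" using assms(1) by (simp add: nonincr_vec_def)
  have "k < m" using step.hyps step.prems by simp
  then have "U (k+1) \<le> U k" using N assms(2) step.hyps by simp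
  moreover have "U k \<le> U i" using step.IH step.prems step.hyps by simp
  ultimately show ?case by simp
qed

lemma ferrers_from_corners:
  assumes "nonincr_vec m U"
  shows "ferrers m U = {(i,j). 1 \<le> i \<and> 1 \<le> j \<and> (\<exists>(a,b)\<in>lr_corners m U. i \<le> a \<and> j \<le> b)}"
proof
  show "ferrers m U \<subseteq> {(i,j). 1 \<le> i \<and> 1 \<le> j \<and> (\<exists>(a,b)\<in>lr_corners m U. i \<le> a \<and> j \<le> b)}"
  proof
    fix p assume "p \<in> ferrers m U"
    then obtain i j where p: "p = (i,j)" "1 \<le> i" "i \<le> m" "1 \<le> j" "j \<le> U i"
      by (auto simp: ferrers_def)
    define T where "T = {a. i \<le> a \<and> a \<le> m \<and> j \<le> U a}"
    have Tf: "finite T" unfolding T_def by auto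
    have iT: "i \<in> T" using p unfolding T_def by auto
    define a where "a = Max T"
    have aT: "a \<in> T" using Tf iT a_def Max_in by blast
    have amax: "\<And>x. x \<in> T \<Longrightarrow> x \<le> a" using Tf a_def by auto
    have "(a, U a) \<in> lr_corners m U"
    proof -
      have "(if a = m then 0 else U (a + 1)) < U a"
      proof (cases "a = m")
        case True then show ?thesis using aT p unfolding T_def by auto
      next
        case False
        have "a + 1 \<notin> T" using amax by fastforce
        then have "U (a+1) < j" using aT False unfolding T_def by auto
        then show ?thesis using aT False unfolding T_def by auto
      qed
      moreover have "1 \<le> a" "a \<le> m" using aT p unfolding T_def by auto
      ultimately show ?thesis unfolding lr_corners_def by blast
    qed
    moreover have "i \<le> a" "j \<le> U a" using aT unfolding T_def by auto
    ultimately show "p \<in> {(i,j). 1 \<le> i \<and> 1 \<le> j \<and> (\<exists>(a,b)\<in>lr_corners m U. i \<le> a \<and> j \<le> b)}"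
      using p by blast
  qed
next
  show "{(i,j). 1 \<le> i \<and> 1 \<le> j \<and> (\<exists>(a,b)\<in>lr_corners m U. i \<le> a \<and> j \<le> b)} \<subseteq> ferrers m U"
  proof clarify
    fix i j a b assume h: "1 \<le> i" "1 \<le> j" "(a,b) \<in> lr_corners m U" "i \<le> a" "j \<le> b"
    then have "b = U a" "1 \<le> a" "a \<le> m" unfolding lr_corners_def by auto
    then show "(i,j) \<in> ferrers m U" using nonincr_chain[OF assms h(1) h(4)] h
      unfolding ferrers_def by auto
  qed
qed

lemma part1:
  assumes P: "polyomino m n A"
  defines "U \<equiv> \<lambda>i. card {j. (i,j) \<in> diagram m n A}"
  shows "nonincr_vec m U \<and> diagram m n A = ferrers m U \<and>
         essential_set m n A = lr_corners m U \<and>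
         ranked_essential_set m n A = {(i, j, 0) | i j. (i, j) \<in> lr_corners m U}"
proof -
  have fin: "finite {j. (i,j) \<in> diagram m n A}" for i
    by (rule finite_subset[of _ "{1..n}"]) (auto simp: diagram_def)
  have row: "{j. (i,j) \<in> diagram m n A} = {1..U i}" for i
    unfolding U_def
  proof (rule downset_int[OF fin])
    show "\<forall>x\<in>{j. (i, j) \<in> diagram m n A}. 1 \<le> x" by (simp add: diagram_def)
    show "\<forall>x\<in>{j. (i, j) \<in> diagram m n A}. \<forall>y. 1 \<le> y \<and> y \<le> x \<longrightarrow> y \<in> {j. (i, j) \<in> diagram m n A}"
    proof (intro ballI allI impI)
      fix x y assume x: "x \<in> {j. (i, j) \<in> diagram m n A}" and y: "1 \<le> y \<and> y \<le> x"
      then have "(i,x) \<in> diagram m n A" by simp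
      moreover then have "1 \<le> i" by (simp add: diagram_def)
      ultimately have "(i,y) \<in> diagram m n A" using diag_down[OF P] y by blast
      then show "y \<in> {j. (i, j) \<in> diagram m n A}" by simp
    qed
  qed
  have D: "diagram m n A = ferrers m U"
  proof (rule set_eqI)
    fix p :: "nat \<times> nat"
    obtain i j where p: "p = (i,j)" by force
    have "(i,j) \<in> diagram m n A \<longleftrightarrow> 1 \<le> i \<and> i \<le> m \<and> j \<in> {1..U i}"
      using row[of i] by (auto simp: diagram_def)
    then show "p \<in> diagram m n A \<longleftrightarrow> p \<in> ferrers m U" using p by (auto simp: ferrers_def)
  qed
  have NI: "nonincr_vec m U"
    unfolding nonincr_vec_def
  proof clarify
    fix i assume "1 \<le> i" "i < m"
    have "{j. (i+1,j) \<in> diagram m n A} \<subseteq> {j. (i,j) \<in> diagram m n A}"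
    proof
      fix y assume "y \<in> {j. (i+1,j) \<in> diagram m n A}"
      then have y: "(i+1,y) \<in> diagram m n A" by simp
      then have "1 \<le> y" "y \<le> y" by (auto simp: diagram_def)
      moreover have "1 \<le> i" "i \<le> i+1" using \<open>1 \<le> i\<close> by auto
      ultimately have "(i,y) \<in> diagram m n A" using diag_down[OF P y] by blast
      then show "y \<in> {j. (i,j) \<in> diagram m n A}" by simp
    qed
    then show "U (i+1) \<le> U i" unfolding U_def using fin card_mono by blast
  qed
  have E: "essential_set m n A = lr_corners m U"
  proof (rule set_eqI)
    fix p :: "nat \<times> nat"
    obtain i j where p: "p = (i,j)" by force
    have "(i,j) \<in> essential_set m n A \<longleftrightarrow> (i,j) \<in> lr_corners m U"
    proof
      assume "(i,j) \<in> essential_set m n A"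
      then have h: "1 \<le> i" "i \<le> m" "1 \<le> j" "j \<le> U i" "\<not> (j + 1 \<le> U i)"
        "\<not> (i + 1 \<le> m \<and> j \<le> U (i+1))"
        unfolding essential_set_def D ferrers_def by auto
      then have "j = U i" by simp
      moreover have "(if i = m then 0 else U (i + 1)) < U i" using h by auto
      ultimately show "(i,j) \<in> lr_corners m U" using h unfolding lr_corners_def by blast
    next
      assume "(i,j) \<in> lr_corners m U"
      then have h: "j = U i" "1 \<le> i" "i \<le> m" "(if i = m then 0 else U (i + 1)) < U i"
        unfolding lr_corners_def by auto
      then show "(i,j) \<in> essential_set m n A"
        unfolding essential_set_def D ferrers_def by (auto split: if_splits)
    qed
    then show "p \<in> essential_set m n A \<longleftrightarrow> p \<in> lr_corners m U" using p by simp
  qed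
  have R: "ranked_essential_set m n A = {(i, j, 0) | i j. (i, j) \<in> lr_corners m U}"
  proof -
    have "rank_at A i j = 0" if "(i,j) \<in> essential_set m n A" for i j
      using rank0[OF P] that by (auto simp: essential_set_def)
    then show ?thesis unfolding ranked_essential_set_def E[symmetric] by force
  qed
  show ?thesis using NI D E R by blast
qed

lemma interval_set:
  fixes S :: "nat set"
  assumes "finite S" "S \<noteq> {}" "\<forall>x\<in>S. \<forall>y z. y \<le> z \<longrightarrow> z \<in> S \<longrightarrow> x \<le> y \<longrightarrow> y \<in> S"
  shows "S = {Min S..<Min S + card S}"
proof -
  have mi: "Min S \<in> S" and ma: "Max S \<in> S" using assms(1,2) by auto
  have "S = {Min S..Max S}"
  proof
    show "S \<subseteq> {Min S..Max S}"
    proof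
      fix x assume "x \<in> S"
      then show "x \<in> {Min S..Max S}" using assms(1) by simp
    qed
    show "{Min S..Max S} \<subseteq> S"
    proof
      fix y assume "y \<in> {Min S..Max S}"
      then have "Min S \<le> y" "y \<le> Max S" by auto
      then show "y \<in> S" using assms(3)[rule_format, OF mi, of y "Max S"] ma by blast
    qed
  qed
  moreover have "Min S \<le> Max S" using assms(1,2) by simp
  ultimately have le: "Min S \<le> Max S" and Seq: "S = {Min S..Max S}" by auto
  have "card S = Suc (Max S) - Min S" using Seq by (metis card_atLeastAtMost)
  then have "Min S + card S = Suc (Max S)" using le by simp
  then have "{Min S..<Min S + card S} = {Min S..Max S}" by (simp only: atLeastLessThanSuc_atLeastAtMost)
  then show ?thesis using Seq by metis
qed

lemma key:
  assumes A01: "is_01mat m n A" and B01: "is_01mat m n B" and convB: "convex_mat m n B"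
    and D: "diagram m n A = diagram m n B"
    and prev: "\<forall>k<i. \<forall>j. A k j = B k j"
    and i: "1 \<le> i" "i \<le> m" and j: "1 \<le> j" "j \<le> n"
    and col: "card {k\<in>{1..m}. A k j} = card {k\<in>{1..m}. B k j}"
    and Aij: "A i j"
  shows "\<exists>j'. 1 \<le> j' \<and> j' \<le> j \<and> B i j'"
proof (rule ccontr)
  assume nb: "\<not> (\<exists>j'. 1 \<le> j' \<and> j' \<le> j \<and> B i j')"
  then have nbi: "\<not> B i j" using j by auto
  show False
  proof (cases "\<exists>i'. 1 \<le> i' \<and> i' < i \<and> A i' j")
    case False
    have "\<not> B i' j" if "1 \<le> i'" "i' \<le> i" for i'
    proof (cases "i' = i")
      case True then show ?thesis using nbi by simp
    next
      case False
      then have "i' < i" using that by simp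
      then show ?thesis using prev \<open>\<not> (\<exists>i'. 1 \<le> i' \<and> i' < i \<and> A i' j)\<close> that by blast
    qed
    then have "(i,j) \<in> diagram m n B" using i j nb unfolding diagram_def by blast
    then have "(i,j) \<in> diagram m n A" using D by simp
    then show False using Aij j unfolding diagram_def by blast
  next
    case True
    then obtain i' where i': "1 \<le> i'" "i' < i" "A i' j" by blast
    then have Bi': "B i' j" using prev by blast
    have sub: "{k\<in>{1..m}. B k j} \<subseteq> {k\<in>{1..m}. A k j}"
    proof
      fix k assume k: "k \<in> {k\<in>{1..m}. B k j}"
      have "k < i"
      proof (rule ccontr)
        assume "\<not> k < i"
        then have "i \<le> k" by simp
        have cc: "\<forall>j\<in>{1..n}. \<forall>i1 i i2. 1 \<le> i1 \<and> i1 \<le> i \<and> i \<le> i2 \<and> i2 \<le> m \<and> B i1 j \<and> B i2 j \<longrightarrow> B i j"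
          using convB unfolding convex_mat_def by blast
        have "j \<in> {1..n}" using j by simp
        moreover have "1 \<le> i' \<and> i' \<le> i \<and> i \<le> k \<and> k \<le> m \<and> B i' j \<and> B k j"
          using i' Bi' k \<open>i \<le> k\<close> by auto
        ultimately have "B i j" using cc by blast
        then show False using nbi by simp
      qed
      then show "k \<in> {k\<in>{1..m}. A k j}" using prev k by auto
    qed
    have "i \<in> {k\<in>{1..m}. A k j}" "i \<notin> {k\<in>{1..m}. B k j}" using i Aij nbi by auto
    then have "{k\<in>{1..m}. B k j} \<subset> {k\<in>{1..m}. A k j}" using sub by blast
    then have "card {k\<in>{1..m}. B k j} < card {k\<in>{1..m}. A k j}"
      by (rule psubset_card_mono[rotated]) simp
    then show False using col by simp
  qed
qed

lemma diag_ess: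
  assumes P: "polyomino m n A"
  shows "diagram m n A = {(i,j). 1 \<le> i \<and> 1 \<le> j \<and> (\<exists>(a,b)\<in>essential_set m n A. i \<le> a \<and> j \<le> b)}"
proof -
  obtain U where "nonincr_vec m U" "diagram m n A = ferrers m U" "essential_set m n A = lr_corners m U"
    using part1[OF P] by blast
  then show ?thesis using ferrers_from_corners by simp
qed

lemma ess_from_ranked:
  "essential_set m n A = (\<lambda>(i,j,r). (i,j)) ` ranked_essential_set m n A"
  unfolding ranked_essential_set_def by force

lemma part2:
  assumes A: "A \<in> convex_class m n R S" and B: "B \<in> convex_class m n R S"
    and PA: "polyomino m n A" and PB: "polyomino m n B"
    and RE: "ranked_essential_set m n A = ranked_essential_set m n B"
  shows "A = B"
proof -
  have A01: "is_01mat m n A" and cA: "convex_mat m n A"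
    and rA: "\<forall>i\<in>{1..m}. card {j\<in>{1..n}. A i j} = R i"
    and sA: "\<forall>j\<in>{1..n}. card {i\<in>{1..m}. A i j} = S j" using A by (auto simp: convex_class_def)
  have B01: "is_01mat m n B" and cB: "convex_mat m n B"
    and rB: "\<forall>i\<in>{1..m}. card {j\<in>{1..n}. B i j} = R i"
    and sB: "\<forall>j\<in>{1..n}. card {i\<in>{1..m}. B i j} = S j" using B by (auto simp: convex_class_def)
  have E: "essential_set m n A = essential_set m n B" using RE ess_from_ranked by metis
  have D: "diagram m n A = diagram m n B" using diag_ess[OF PA] diag_ess[OF PB] E by simp
  have col: "card {k\<in>{1..m}. A k j} = card {k\<in>{1..m}. B k j}" if "j \<in> {1..n}" for j
    using sA sB that by simp
  have "\<forall>j. A i j = B i j" for i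
  proof (induction i rule: less_induct)
    case (less i)
    then have prev: "\<forall>k<i. \<forall>j. A k j = B k j" by blast
    show ?case
    proof (cases "1 \<le> i \<and> i \<le> m")
      case False
      then show ?thesis using A01 B01 unfolding is_01mat_def by blast
    next
      case True
      then have i: "1 \<le> i" "i \<le> m" by auto
      define RA where "RA = {j\<in>{1..n}. A i j}"
      define RB where "RB = {j\<in>{1..n}. B i j}"
      have fA: "finite RA" and fB: "finite RB" unfolding RA_def RB_def by auto
      have cc: "card RA = card RB" using rA rB i unfolding RA_def RB_def by simp
      have memA: "A i j \<longleftrightarrow> j \<in> RA" for j using A01 unfolding RA_def is_01mat_def by auto
      have memB: "B i j \<longleftrightarrow> j \<in> RB" for j using B01 unfolding RB_def is_01mat_def by auto
      have "RA = RB"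
      proof (cases "RA = {}")
        case True
        then have "RB = {}" using cc fB by simp
        then show ?thesis using True by simp
      next
        case False
        then have nB: "RB \<noteq> {}" using cc fA by auto
        have rcA: "\<forall>i\<in>{1..m}. \<forall>j1 j j2. 1 \<le> j1 \<and> j1 \<le> j \<and> j \<le> j2 \<and> j2 \<le> n \<and> A i j1 \<and> A i j2 \<longrightarrow> A i j"
          using cA unfolding convex_mat_def by blast
        have cvA: "\<forall>x\<in>RA. \<forall>y z. y \<le> z \<longrightarrow> z \<in> RA \<longrightarrow> x \<le> y \<longrightarrow> y \<in> RA"
        proof (intro ballI allI impI)
          fix x y z assume h: "x \<in> RA" "y \<le> z" "z \<in> RA" "x \<le> y"
          then have h2: "1 \<le> x" "A i x" "z \<le> n" "A i z" unfolding RA_def by auto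
          have "i \<in> {1..m}" using i by simp
          then have "A i y" using rcA h h2 by blast
          then show "y \<in> RA" using h h2 unfolding RA_def by simp
        qed
        have rcB: "\<forall>i\<in>{1..m}. \<forall>j1 j j2. 1 \<le> j1 \<and> j1 \<le> j \<and> j \<le> j2 \<and> j2 \<le> n \<and> B i j1 \<and> B i j2 \<longrightarrow> B i j"
          using cB unfolding convex_mat_def by blast
        have cvB: "\<forall>x\<in>RB. \<forall>y z. y \<le> z \<longrightarrow> z \<in> RB \<longrightarrow> x \<le> y \<longrightarrow> y \<in> RB"
        proof (intro ballI allI impI)
          fix x y z assume h: "x \<in> RB" "y \<le> z" "z \<in> RB" "x \<le> y"
          then have h2: "1 \<le> x" "B i x" "z \<le> n" "B i z" unfolding RB_def by auto
          have "i \<in> {1..m}" using i by simp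
          then have "B i y" using rcB h h2 by blast
          then show "y \<in> RB" using h h2 unfolding RB_def by simp
        qed
        have m1: "Min RB \<le> Min RA"
        proof -
          have "Min RA \<in> RA" using fA False by simp
          then have h: "A i (Min RA)" "1 \<le> Min RA" "Min RA \<le> n" unfolding RA_def by auto
          obtain j' where "1 \<le> j'" "j' \<le> Min RA" "B i j'"
            using key[OF A01 B01 cB D prev i h(2) h(3) col h(1)] h by auto
          then have "j' \<in> RB" using memB by simp
          then show ?thesis using fB \<open>j' \<le> Min RA\<close> Min_le order_trans by blast
        qed
        have m2: "Min RA \<le> Min RB"
        proof -
          have "Min RB \<in> RB" using fB nB by simp
          then have h: "B i (Min RB)" "1 \<le> Min RB" "Min RB \<le> n" unfolding RB_def by auto
          have prev': "\<forall>k<i. \<forall>j. B k j = A k j" using prev by simp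
          have col': "card {k\<in>{1..m}. B k (Min RB)} = card {k\<in>{1..m}. A k (Min RB)}"
            using col h by simp
          obtain j' where "1 \<le> j'" "j' \<le> Min RB" "A i j'"
            using key[OF B01 A01 cA D[symmetric] prev' i h(2) h(3) col' h(1)] by auto
          then have "j' \<in> RA" using memA by simp
          then show ?thesis using fA \<open>j' \<le> Min RB\<close> Min_le order_trans by blast
        qed
        show ?thesis using interval_set[OF fA False cvA] interval_set[OF fB nB cvB] m1 m2 cc
          by simp
      qed
      then show ?thesis using memA memB by simp
    qed
  qed
  then show ?thesis by blast
qed

theorem mainTheorem2:
  shows "(\<forall>m n A. polyomino m n A \<longrightarrow>
            (\<exists>U. nonincr_vec m U \<and> diagram m n A = ferrers m U \<and>
                 ranked_essential_set m n A = {(i, j, 0) | i j. (i, j) \<in> lr_corners m U})) \<and>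
         (\<forall>m n (R :: nat \<Rightarrow> nat) (S :: nat \<Rightarrow> nat) A B.
            A \<in> convex_class m n R S \<and> B \<in> convex_class m n R S \<and>
            polyomino m n A \<and> polyomino m n B \<and>
            ranked_essential_set m n A = ranked_essential_set m n B \<longrightarrow> A = B)"
proof (intro conjI allI impI)
  fix m n A assume "polyomino m n A"
  then show "\<exists>U. nonincr_vec m U \<and> diagram m n A = ferrers m U \<and>
                 ranked_essential_set m n A = {(i, j, 0) | i j. (i, j) \<in> lr_corners m U}"
    using part1 by blast
next
  fix m n and R S :: "nat \<Rightarrow> nat" and A B
  assume "A \<in> convex_class m n R S \<and> B \<in> convex_class m n R S \<and>
            polyomino m n A \<and> polyomino m n B \<and>
            ranked_essential_set m n A = ranked_essential_set m n B"
  then show "A = B" using part2 by blast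
qed

end
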